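(* Suppose that $U=L(0)\otimes A\oplus L(2)\otimes B$. The algebra $\mathrm{Com}^{\mathrm{TKK}}(U)$ is the quotient of $S(U)$ by the relations given by the $\mathfrak{sl}_2$-submodule in $S^2(U)$ generated by $S^2(e\otimes B)$, where $e$ is the highest weight vector of $L(2)$. In particular, we have an isomorphism of commutative associative algebras \[ \mathrm{Com}^{\mathrm{TKK}}(U)\cong S(A)\otimes\mathrm{Com}^{\mathrm{TKK}}(L(2)\otimes B). \]
   Context: We work over a field $k$ of characteristic zero. For $n\ge 0$, $L(n)$ denotes the irreducible $\mathfrak{sl}_2$-module of highest weight $n$; $L(0)$ is the trivial module and $L(2)$ is the adjoint module $\mathfrak{sl}_2$ with basis $e,f,h$. The Tits--Kantor--Koecher category $\mathrm{TKK}$ has as objects the completely reducible $\mathfrak{sl}_2$-modules that are direct sums of copies of $L(0)$ and $L(2)$, i.e. modules $L(0)\otimes A\oplus L(2)\otimes B$ for multiplicity vector spaces $A,B$, and as morphisms the $\mathfrak{sl}_2$-module maps. For an operad $\mathcal{P}$, a $\mathcal{P}$-algebra in $\mathrm{TKK}$ is an object of $\mathrm{TKK}$ with a $\mathcal{P}$-algebra structure whose structure map is $\mathfrak{sl}_2$-equivariant; the free $\mathcal{P}$-algebra $\mathcal{P}^{\mathrm{TKK}}(U)$ in $\mathrm{TKK}$ generated by $U$ is the left adjoint of the forgetful functor, and it is the quotient of the free $\mathcal{P}$-algebra $\mathcal{P}(U)$ by the ideal generated by all isotypic components of the form $L(m)$, $m\ne 0,2$. Here $\mathrm{Com}(V)$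 denotes the free unital commutative associative algebra, i.e. the symmetric algebra $S(V)$, and $\mathrm{Com}^{\mathrm{TKK}}(U)$ is the free unital commutative associative algebra in $\mathrm{TKK}$ generated by $U$. *)

theory Defs
  imports Main "HOL-Library.Poly_Mapping"
begin

text \<open>Polynomial (= symmetric) algebra over the field 'k in variables of type 'v:
  finitely supported functions from monomials (exponent vectors) to coefficients.\<close>
type_synonym ('v, 'k) mpoly = "('v \<Rightarrow>\<^sub>0 nat) \<Rightarrow>\<^sub>0 'k"

definition Var :: "'v \<Rightarrow> ('v, 'k::comm_ring_1) mpoly" where
  "Var v = Poly_Mapping.single (Poly_Mapping.single v 1) 1"

definition Const :: "'k::comm_ring_1 \<Rightarrow> ('v, 'k) mpoly" where
  "Const c = Poly_Mapping.single 0 c"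

definition vars :: "('v, 'k::comm_ring_1) mpoly \<Rightarrow> 'v set" where
  "vars p = (\<Union>\<alpha>\<in>Poly_Mapping.keys p. Poly_Mapping.keys \<alpha>)"

text \<open>Polynomials whose variables lie in V: the symmetric algebra on the span of V.\<close>
definition polys :: "'v set \<Rightarrow> ('v, 'k::comm_ring_1) mpoly set" where
  "polys V = {p. vars p \<subseteq> V}"

definition pd :: "'v \<Rightarrow> ('v, 'k::comm_ring_1) mpoly \<Rightarrow> ('v, 'k) mpoly" where
  "pd x p = Abs_poly_mapping
     (\<lambda>\<alpha>::'v \<Rightarrow>\<^sub>0 nat. of_nat (Poly_Mapping.lookup \<alpha> x + 1) * Poly_Mapping.lookup p (\<alpha> + Poly_Mapping.single x 1))"

text \<open>The basis e, h, f of sl2 and its adjoint action: ad g s = (c, t) means [g,s] = c t.\<close>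
datatype sl2b = E | H | F

fun ad :: "sl2b \<Rightarrow> sl2b \<Rightarrow> int \<times> sl2b" where
  "ad E E = (0, E)" | "ad E H = (-2, E)" | "ad E F = (1, H)"
| "ad H E = (2, E)" | "ad H H = (0, H)" | "ad H F = (-2, F)"
| "ad F E = (-1, H)" | "ad F H = (2, F)" | "ad F F = (0, F)"

text \<open>Extension of the action on generators (linear forms) to the whole symmetric
  algebra as derivations.\<close>
definition act :: "(sl2b \<Rightarrow> 'v \<Rightarrow> ('v, 'k::comm_ring_1) mpoly)
                   \<Rightarrow> sl2b \<Rightarrow> ('v, 'k) mpoly \<Rightarrow> ('v, 'k) mpoly" where
  "act gen g p = (\<Sum>x\<in>vars p. pd x p * gen g x)"

text \<open>U = L(0) \<otimes> A \<oplus> L(2) \<otimes> B with basis Inl a (a \<in> IA, basis of A) and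
  Inr (b, s) = s \<otimes> b (b \<in> IB, basis of B, s \<in> {e,h,f}).\<close>
definition gen_U :: "sl2b \<Rightarrow> 'a + 'b \<times> sl2b \<Rightarrow> ('a + 'b \<times> sl2b, 'k::comm_ring_1) mpoly" where
  "gen_U g x = (case x of Inl a \<Rightarrow> 0
      | Inr (b, s) \<Rightarrow> (case ad g s of (c, t) \<Rightarrow> Const (of_int c) * Var (Inr (b, t))))"

definition vars_U :: "'a set \<Rightarrow> 'b set \<Rightarrow> ('a + 'b \<times> sl2b) set" where
  "vars_U IA IB = Inl ` IA \<union> Inr ` (IB \<times> UNIV)"

definition gen_B :: "sl2b \<Rightarrow> 'b \<times> sl2b \<Rightarrow> ('b \<times> sl2b, 'k::comm_ring_1) mpoly" where
  "gen_B g x = (case x of (b, s) \<Rightarrow>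
      (case ad g s of (c, t) \<Rightarrow> Const (of_int c) * Var (b, t)))"

definition ideal_gen :: "'v set \<Rightarrow> ('v, 'k::comm_ring_1) mpoly set \<Rightarrow> ('v, 'k) mpoly set" where
  "ideal_gen V S = {(\<Sum>i<n. r i * s i) | (n::nat) r s. \<forall>i<n. r i \<in> polys V \<and> s i \<in> S}"

text \<open>w 0, ..., w m is a basis of a submodule isomorphic to L(m), in the standard
  form h w_i = (m-2i) w_i, f w_i = w_(i+1), e w_i = i(m-i+1) w_(i-1).\<close>
definition is_Lcopy :: "'v set \<Rightarrow> (sl2b \<Rightarrow> ('v, 'k::field_char_0) mpoly \<Rightarrow> ('v, 'k) mpoly)
                        \<Rightarrow> nat \<Rightarrow> (nat \<Rightarrow> ('v, 'k) mpoly) \<Rightarrow> bool" where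
  "is_Lcopy V A m w \<longleftrightarrow>
     (\<forall>i\<le>m. w i \<in> polys V) \<and>
     (\<forall>c. (\<Sum>i\<le>m. Const (c i) * w i) = 0 \<longrightarrow> (\<forall>i\<le>m. c i = 0)) \<and>
     (\<forall>i\<le>m. A H (w i) = Const (of_int (int m - 2 * int i)) * w i) \<and>
     (\<forall>i\<le>m. A F (w i) = (if i = m then 0 else w (Suc i))) \<and>
     (\<forall>i\<le>m. A E (w i) = (if i = 0 then 0 else Const (of_nat (i * (m - i + 1))) * w (i - 1)))"

definition span_of :: "nat \<Rightarrow> (nat \<Rightarrow> ('v, 'k::comm_ring_1) mpoly) \<Rightarrow> ('v, 'k) mpoly set" where
  "span_of m w = {(\<Sum>i\<le>m. Const (c i) * w i) | c. True}"

definition isotypic :: "'v set \<Rightarrow> (sl2b \<Rightarrow> ('v, 'k::field_char_0) mpoly \<Rightarrow> ('v, 'k) mpoly)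
                        \<Rightarrow> nat \<Rightarrow> ('v, 'k) mpoly set" where
  "isotypic V A m = {(\<Sum>j<n. u j) | (n::nat) u.
      \<forall>j<n. \<exists>w. is_Lcopy V A m w \<and> u j \<in> span_of m w}"

text \<open>The ideal whose quotient is Com^TKK: generated by all isotypic components L(m), m \<noteq> 0,2.\<close>
definition tkk_ideal :: "'v set \<Rightarrow> (sl2b \<Rightarrow> ('v, 'k::field_char_0) mpoly \<Rightarrow> ('v, 'k) mpoly)
                         \<Rightarrow> ('v, 'k) mpoly set" where
  "tkk_ideal V A = ideal_gen V (\<Union>m\<in>{m. m \<noteq> 0 \<and> m \<noteq> 2}. isotypic V A m)"

inductive_set submod_gen :: "(sl2b \<Rightarrow> ('v, 'k::comm_ring_1) mpoly \<Rightarrow> ('v, 'k) mpoly)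
                              \<Rightarrow> ('v, 'k) mpoly set \<Rightarrow> ('v, 'k) mpoly set"
  for A S where
  base: "s \<in> S \<Longrightarrow> s \<in> submod_gen A S"
| zero: "0 \<in> submod_gen A S"
| add: "p \<in> submod_gen A S \<Longrightarrow> q \<in> submod_gen A S \<Longrightarrow> p + q \<in> submod_gen A S"
| smult: "p \<in> submod_gen A S \<Longrightarrow> Const c * p \<in> submod_gen A S"
| action: "p \<in> submod_gen A S \<Longrightarrow> A g p \<in> submod_gen A S"

text \<open>The algebra embedding S(L(2) \<otimes> B) \<rightarrow> S(U) induced by the inclusion of variables.\<close>
definition embed :: "('b \<times> sl2b, 'k::comm_ring_1) mpoly \<Rightarrow> ('a + 'b \<times> sl2b, 'k) mpoly" where
  "embed q = (\<Sum>\<alpha>\<in>Poly_Mapping.keys q. Poly_Mapping.single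
       (\<Sum>x\<in>Poly_Mapping.keys \<alpha>. Poly_Mapping.single (Inr x) (Poly_Mapping.lookup \<alpha> x)) (Poly_Mapping.lookup q \<alpha>))"

end

theory Submission
  imports Defs
begin

lemma mp_induct [case_names zero add]:
  assumes "P 0" and "\<And>a b f. P f \<Longrightarrow> P (Poly_Mapping.single a b + f)"
  shows "P (f :: 'a \<Rightarrow>\<^sub>0 'b::monoid_add)"
proof (induct f rule: update_induct)
  case const then show ?case using assms(1) .
next
  case (update f a b)
  have "Poly_Mapping.update a b f = Poly_Mapping.single a b + f"
    using update(1) by (intro poly_mapping_eqI) (auto simp: lookup_update lookup_add lookup_single in_keys_iff)
  then show ?case using assms(2) update(3) by simp
qed

lemma lookup_Const_mult: "Poly_Mapping.lookup (Const c * p) a = c * Poly_Mapping.lookup p a"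
  unfolding Const_def mult_map_scale_conv_mult[symmetric]
  by transfer (auto simp: when_def)

lemma Const_of_int [simp]: "Const (of_int k) = of_int k" by (simp add: Const_def)
lemma Const_of_nat [simp]: "Const (of_nat k) = of_nat k" by (simp add: Const_def)
lemma Const_one [simp]: "Const 1 = 1" by (simp add: Const_def)
lemma Const_zero [simp]: "Const 0 = 0" by (simp add: Const_def)
lemma Const_add: "Const (a + b) = Const a + Const b" by (simp add: Const_def single_add)
lemma Const_mult: "Const (a * b) = Const a * Const b" by (simp add: Const_def mult_single)

lemma Const_mult_eq_0: "Const (c::'k::field) * p = 0 \<Longrightarrow> c = 0 \<or> p = 0"
  by (metis lookup_Const_mult mult_eq_0_iff lookup_zero poly_mapping_eqI)

lemma Var_mult: "Var x * Var y = Poly_Mapping.single (Poly_Mapping.single x 1 + Poly_Mapping.single y 1) 1"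
  by (simp add: Var_def mult_single)


lemma vars_iff: "x \<in> vars p \<longleftrightarrow> (\<exists>a\<in>Poly_Mapping.keys p. x \<in> Poly_Mapping.keys a)"
  by (auto simp: vars_def)

lemma finite_vars [simp]: "finite (vars p)"
  by (simp add: vars_def)

lemma keys_add_nat: "Poly_Mapping.keys ((a::'v \<Rightarrow>\<^sub>0 nat) + b) = Poly_Mapping.keys a \<union> Poly_Mapping.keys b"
  by (auto simp: in_keys_iff lookup_add)

lemma vars_add: "vars (p + q) \<subseteq> vars p \<union> vars q"
  using keys_add[of p q] by (auto simp: vars_def)

lemma vars_mult: "vars (p * q) \<subseteq> vars p \<union> vars q"
  using keys_mult[of p q] by (force simp: vars_def keys_add_nat)

lemma vars_single: "vars (Poly_Mapping.single a c) \<subseteq> Poly_Mapping.keys a"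
  by (auto simp: vars_def split: if_splits)

lemma vars_Const [simp]: "vars (Const c) = {}"
  using vars_single[of 0 c] by (auto simp: Const_def)

lemma vars_Var: "vars (Var x) \<subseteq> {x}"
  using vars_single[of "Poly_Mapping.single x 1" 1] by (auto simp: Var_def split: if_splits)

lemma vars_zero [simp]: "vars 0 = {}" by (simp add: vars_def)

lemma vars_uminus [simp]: "vars (- p) = vars p"
  by (simp add: vars_def keys_def)

lemma vars_sum: "vars (sum f A) \<subseteq> (\<Union>i\<in>A. vars (f i))"
proof (induct A rule: infinite_finite_induct)
  case (insert x F) then show ?case using vars_add[of "f x" "sum f F"] by auto
qed auto

lemma polys_add: "p \<in> polys V \<Longrightarrow> q \<in> polys V \<Longrightarrow> p + q \<in> polys V"
  using vars_add by (fastforce simp: polys_def)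
lemma polys_mult: "p \<in> polys V \<Longrightarrow> q \<in> polys V \<Longrightarrow> p * q \<in> polys V"
  using vars_mult by (fastforce simp: polys_def)
lemma polys_Const [simp]: "Const c \<in> polys V" by (simp add: polys_def)
lemma polys_zero [simp]: "0 \<in> polys V" by (simp add: polys_def)
lemma polys_one [simp]: "1 \<in> polys V" using polys_Const[of 1] by simp
lemma polys_of_int [simp]: "of_int k \<in> polys V" using polys_Const[of "of_int k"] by simp
lemma polys_Var: "x \<in> V \<Longrightarrow> Var x \<in> polys V" using vars_Var by (fastforce simp: polys_def)
lemma polys_uminus: "p \<in> polys V \<Longrightarrow> - p \<in> polys V" by (simp add: polys_def)
lemma polys_sum: "(\<And>i. i \<in> A \<Longrightarrow> f i \<in> polys V) \<Longrightarrow> sum f A \<in> polys V"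
  using vars_sum[of f A] by (fastforce simp: polys_def)

lemma lookup_pd:
  fixes x :: 'v and p :: "('v,'a::comm_ring_1) mpoly"
  shows "Poly_Mapping.lookup (pd x p) g =
   of_nat (Poly_Mapping.lookup g x + 1) * Poly_Mapping.lookup p (g + Poly_Mapping.single x 1)"
proof -
  have inj: "inj (\<lambda>g::'v \<Rightarrow>\<^sub>0 nat. g + Poly_Mapping.single x 1)" by (auto intro: injI)
  have "{g. of_nat (Poly_Mapping.lookup g x + 1) * Poly_Mapping.lookup p (g + Poly_Mapping.single x 1) \<noteq> (0::'a)}
      \<subseteq> (\<lambda>g. g + Poly_Mapping.single x 1) -` Poly_Mapping.keys p"
    by (auto simp: in_keys_iff)
  moreover have "finite ((\<lambda>g. g + Poly_Mapping.single x 1) -` Poly_Mapping.keys p)"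
    using inj by (intro finite_vimageI) auto
  ultimately show ?thesis unfolding pd_def by (subst lookup_Abs_poly_mapping) (auto intro: finite_subset)
qed

lemma pd_add: "pd x (p + q) = pd x p + pd x q"
  by (rule poly_mapping_eqI) (simp add: lookup_pd lookup_add distrib_left)

lemma pd_zero [simp]: "pd x 0 = 0"
  by (rule poly_mapping_eqI) (simp add: lookup_pd)

lemma pd_uminus: "pd x (- p) = - pd x p"
  by (rule poly_mapping_eqI) (simp add: lookup_pd)

lemma pd_Const_mult: "pd x (Const c * p) = Const c * pd x p"
  by (rule poly_mapping_eqI) (simp add: lookup_pd lookup_Const_mult mult.left_commute)

lemma pd_notin:
  fixes x :: 'v and p :: "('v,'a::comm_ring_1) mpoly"
  shows "x \<notin> vars p \<Longrightarrow> pd x p = 0"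
proof (rule poly_mapping_eqI)
  fix g :: "'v \<Rightarrow>\<^sub>0 nat" assume "x \<notin> vars p"
  moreover have "x \<in> Poly_Mapping.keys (g + Poly_Mapping.single x 1)"
    by (simp add: keys_add_nat)
  ultimately have "g + Poly_Mapping.single x 1 \<notin> Poly_Mapping.keys p"
    by (auto simp: vars_iff)
  then show "Poly_Mapping.lookup (pd x p) g = Poly_Mapping.lookup 0 g"
    by (simp add: lookup_pd in_keys_iff)
qed

lemma vars_pd: "vars (pd x p) \<subseteq> vars p"
proof
  fix y assume "y \<in> vars (pd x p)"
  then obtain g where g: "g \<in> Poly_Mapping.keys (pd x p)" "y \<in> Poly_Mapping.keys g" by (auto simp: vars_iff)
  then have "g + Poly_Mapping.single x 1 \<in> Poly_Mapping.keys p" by (auto simp: in_keys_iff lookup_pd)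
  moreover have "y \<in> Poly_Mapping.keys (g + Poly_Mapping.single x 1)" using g(2) by (simp add: keys_add_nat)
  ultimately show "y \<in> vars p" by (auto simp: vars_iff)
qed

lemma pd_single_succ: "pd x (Poly_Mapping.single (g + Poly_Mapping.single x 1) c)
   = Poly_Mapping.single g (of_nat (Poly_Mapping.lookup g x + 1) * c)"
  by (rule poly_mapping_eqI) (auto simp: lookup_pd lookup_single when_def)

lemma pd_single_zero: "Poly_Mapping.lookup g x = 0 \<Longrightarrow> pd x (Poly_Mapping.single g c) = 0"
  by (rule poly_mapping_eqI) (auto simp: lookup_pd lookup_single when_def lookup_add)

lemma split_key: "Poly_Mapping.lookup g x \<noteq> 0 \<Longrightarrow> \<exists>h. g = h + Poly_Mapping.single x (1::nat)"
  by (rule exI[of _ "g - Poly_Mapping.single x 1"])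
     (rule poly_mapping_eqI, auto simp: lookup_add lookup_minus lookup_single when_def)


lemma pd_mono_mult:
  fixes x :: 'v and c d :: "'k::comm_ring_1"
  shows "pd x (Poly_Mapping.single a c * Poly_Mapping.single b d) =
    pd x (Poly_Mapping.single a c) * Poly_Mapping.single b d + Poly_Mapping.single a c * pd x (Poly_Mapping.single b d)"
proof (cases "Poly_Mapping.lookup a x = 0")
  case a0: True
  show ?thesis
  proof (cases "Poly_Mapping.lookup b x = 0")
    case True
    then show ?thesis using a0 by (simp add: mult_single pd_single_zero lookup_add)
  next
    case False
    obtain b' where b: "b = b' + Poly_Mapping.single x 1" using split_key[OF False] by blast
    have "Poly_Mapping.single a c * Poly_Mapping.single b d = Poly_Mapping.single ((a+b') + Poly_Mapping.single x 1) (c*d)"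
      by (simp only: b mult_single add.assoc)
    then have 1: "pd x (Poly_Mapping.single a c * Poly_Mapping.single b d) = Poly_Mapping.single (a+b') (of_nat (Poly_Mapping.lookup (a+b') x + 1) * (c*d))"
      by (simp only: pd_single_succ)
    have 2: "Poly_Mapping.single a c * pd x (Poly_Mapping.single b d) = Poly_Mapping.single (a+b') (c * (of_nat (Poly_Mapping.lookup b' x + 1) * d))"
      by (simp only: b pd_single_succ mult_single)
    show ?thesis unfolding 1 2 using a0 by (simp add: pd_single_zero lookup_add ac_simps)
  qed
next
  case False
  obtain a' where a: "a = a' + Poly_Mapping.single x 1" using split_key[OF False] by blast
  show ?thesis
  proof (cases "Poly_Mapping.lookup b x = 0")
    case b0: True
    have "Poly_Mapping.single a c * Poly_Mapping.single b d = Poly_Mapping.single ((a'+b) + Poly_Mapping.single x 1) (c*d)"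
      by (simp only: a mult_single add.assoc add.commute[of "Poly_Mapping.single x 1" b])
    then have 1: "pd x (Poly_Mapping.single a c * Poly_Mapping.single b d) = Poly_Mapping.single (a'+b) (of_nat (Poly_Mapping.lookup (a'+b) x + 1) * (c*d))"
      by (simp only: pd_single_succ)
    have 2: "pd x (Poly_Mapping.single a c) * Poly_Mapping.single b d = Poly_Mapping.single (a'+b) ((of_nat (Poly_Mapping.lookup a' x + 1) * c) * d)"
      by (simp only: a pd_single_succ mult_single)
    show ?thesis unfolding 1 2 using b0 by (simp add: pd_single_zero lookup_add ac_simps)
  next
    case False
    obtain b' where b: "b = b' + Poly_Mapping.single x 1" using split_key[OF False] by blast
    have "Poly_Mapping.single a c * Poly_Mapping.single b d = Poly_Mapping.single ((a' + b' + Poly_Mapping.single x 1) + Poly_Mapping.single x 1) (c*d)"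
      by (simp only: a b mult_single add.assoc add.left_commute[of "Poly_Mapping.single x 1" b'])
    then have 1: "pd x (Poly_Mapping.single a c * Poly_Mapping.single b d) = Poly_Mapping.single (a' + b' + Poly_Mapping.single x 1) (of_nat (Poly_Mapping.lookup (a' + b' + Poly_Mapping.single x 1) x + 1) * (c*d))"
      by (simp only: pd_single_succ)
    have 2: "pd x (Poly_Mapping.single a c) * Poly_Mapping.single b d = Poly_Mapping.single (a' + b' + Poly_Mapping.single x 1) ((of_nat (Poly_Mapping.lookup a' x + 1) * c) * d)"
      by (simp only: a b pd_single_succ mult_single add.assoc)
    have 3: "Poly_Mapping.single a c * pd x (Poly_Mapping.single b d) = Poly_Mapping.single (a' + b' + Poly_Mapping.single x 1) (c * (of_nat (Poly_Mapping.lookup b' x + 1) * d))"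
      by (simp only: a b pd_single_succ mult_single add.assoc add.commute[of "Poly_Mapping.single x 1" b'])
    show ?thesis unfolding 1 2 3 single_add[symmetric] by (simp add: lookup_add algebra_simps)
  qed
qed

lemma pd_mult: "pd x (p * q) = pd x p * q + p * pd x q"
proof (induct p rule: mp_induct)
  case zero then show ?case by simp
next
  case (add a c p)
  have "pd x (Poly_Mapping.single a c * q) = pd x (Poly_Mapping.single a c) * q + Poly_Mapping.single a c * pd x q"
  proof (induct q rule: mp_induct)
    case zero then show ?case by simp
  next
    case (add b d q)
    then show ?case by (simp add: distrib_left distrib_right pd_add pd_mono_mult)
  qed
  with add show ?case by (simp add: distrib_left distrib_right pd_add)
qed

lemma pd_Var: "pd x (Var y) = (if x = y then 1 else 0)"
proof (cases "x = y")
  case True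
  have "pd x (Var y) = pd x (Poly_Mapping.single (0 + Poly_Mapping.single x 1) 1)" by (simp add: Var_def True)
  also have "\<dots> = 1" by (simp only: pd_single_succ) simp
  finally show ?thesis using True by simp
next
  case False
  then show ?thesis by (simp add: Var_def pd_single_zero lookup_single)
qed

lemma pd_Const: "pd x (Const c) = 0"
  by (simp add: Const_def pd_single_zero)


lemma act_superset: "finite S \<Longrightarrow> vars p \<subseteq> S \<Longrightarrow> act gen g p = (\<Sum>x\<in>S. pd x p * gen g x)"
  unfolding act_def by (rule sum.mono_neutral_left) (auto simp: pd_notin)

lemma act_add: "act gen g (p + q) = act gen g p + act gen g q"
proof -
  let ?S = "vars p \<union> vars q"
  have "act gen g (p + q) = (\<Sum>x\<in>?S. pd x (p + q) * gen g x)"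
    using vars_add[of p q] by (intro act_superset) auto
  also have "\<dots> = (\<Sum>x\<in>?S. pd x p * gen g x) + (\<Sum>x\<in>?S. pd x q * gen g x)"
    by (simp add: pd_add distrib_right sum.distrib)
  also have "\<dots> = act gen g p + act gen g q"
    by (subst (1 2) act_superset[of ?S]) auto
  finally show ?thesis .
qed

lemma act_mult: "act gen g (p * q) = act gen g p * q + p * act gen g q"
proof -
  let ?S = "vars p \<union> vars q"
  have "act gen g (p * q) = (\<Sum>x\<in>?S. pd x (p * q) * gen g x)"
    using vars_mult[of p q] by (intro act_superset) auto
  also have "\<dots> = (\<Sum>x\<in>?S. pd x p * gen g x) * q + p * (\<Sum>x\<in>?S. pd x q * gen g x)"
    by (simp add: pd_mult sum_distrib_left sum_distrib_right sum.distrib[symmetric] algebra_simps)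
  also have "\<dots> = act gen g p * q + p * act gen g q"
    by (subst (1 2) act_superset[of ?S]) auto
  finally show ?thesis .
qed

lemma act_Const [simp]: "act gen g (Const c) = 0"
  by (simp add: act_def)

lemma act_zero [simp]: "act gen g 0 = 0"
  by (simp add: act_def)

lemma act_one [simp]: "act gen g 1 = 0"
  using act_Const[of gen g 1] by simp

lemma act_of_int [simp]: "act gen g (of_int k) = 0"
  using act_Const[of gen g "of_int k"] by simp

lemma act_numeral [simp]: "act gen g (numeral k) = 0"
  using act_Const[of gen g "numeral k"] by (simp add: Const_def)

lemma act_Const_mult: "act gen g (Const c * p) = Const c * act gen g p"
  by (simp add: act_mult)

lemma act_uminus: "act gen g (- p) = - act gen g p"
  using act_add[of gen g p "- p"] by (simp add: eq_neg_iff_add_eq_0 add.commute)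

lemma act_diff: "act gen g (p - q) = act gen g p - act gen g q"
  using act_add[of gen g p "- q"] by (simp add: act_uminus)

lemma act_sum: "act gen g (sum f A) = (\<Sum>i\<in>A. act gen g (f i))"
  by (induct A rule: infinite_finite_induct) (auto simp: act_add)

lemma act_Var: "act gen g (Var x) = gen g x"
proof -
  have "act gen g (Var x) = (\<Sum>y\<in>{x}. pd y (Var x) * gen g y)"
    using vars_Var[of x] by (intro act_superset) auto
  then show ?thesis by (simp add: pd_Var)
qed

lemma act_polys:
  assumes "\<And>x. x \<in> V \<Longrightarrow> gen g x \<in> polys V" "p \<in> polys V"
  shows "act gen g p \<in> polys V"
  unfolding act_def
proof (rule polys_sum)
  fix x assume "x \<in> vars p"
  then have "x \<in> V" using assms(2) by (auto simp: polys_def)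
  moreover have "pd x p \<in> polys V" using vars_pd[of x p] assms(2) by (auto simp: polys_def)
  ultimately show "pd x p * gen g x \<in> polys V" using assms(1) by (simp add: polys_mult)
qed


lemma ig_iff: "p \<in> ideal_gen V S \<longleftrightarrow> (\<exists>(n::nat) r s. p = (\<Sum>i<n. r i * s i) \<and> (\<forall>i<n. r i \<in> polys V \<and> s i \<in> S))"
  unfolding ideal_gen_def by blast

lemma ig_zero [simp]: "0 \<in> ideal_gen V S"
  unfolding ideal_gen_def by (rule CollectI, rule exI[of _ 0]) auto

lemma ig_snoc:
  assumes "p \<in> ideal_gen V S" "r \<in> polys V" "s \<in> S"
  shows "p + r * s \<in> ideal_gen V S"
proof -
  obtain n :: nat and rr ss where p: "p = (\<Sum>i<n. rr i * ss i)" "\<forall>i<n. rr i \<in> polys V \<and> ss i \<in> S"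
    using assms(1) unfolding ig_iff by blast
  have "p + r * s = (\<Sum>i<Suc n. (rr(n := r)) i * (ss(n := s)) i)"
    using p(1) by simp
  moreover have "\<forall>i<Suc n. (rr(n := r)) i \<in> polys V \<and> (ss(n := s)) i \<in> S"
    using p(2) assms by (auto simp: less_Suc_eq)
  ultimately show ?thesis unfolding ig_iff by blast
qed

lemma ig_add:
  assumes "p \<in> ideal_gen V S" "q \<in> ideal_gen V S"
  shows "p + q \<in> ideal_gen V S"
proof -
  obtain n :: nat and rr ss where q: "q = (\<Sum>i<n. rr i * ss i)" "\<forall>i<n. rr i \<in> polys V \<and> ss i \<in> S"
    using assms(2) unfolding ig_iff by blast
  have "\<forall>m\<le>n. p + (\<Sum>i<m. rr i * ss i) \<in> ideal_gen V S"
  proof (intro allI impI)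
    fix m assume "m \<le> n"
    then show "p + (\<Sum>i<m. rr i * ss i) \<in> ideal_gen V S"
    proof (induct m)
      case 0 then show ?case using assms(1) by simp
    next
      case (Suc m)
      then have "p + (\<Sum>i<m. rr i * ss i) + rr m * ss m \<in> ideal_gen V S"
        using q(2) by (intro ig_snoc) auto
      then show ?case by (simp add: add.assoc)
    qed
  qed
  then show ?thesis using q(1) by auto
qed

lemma ig_mult:
  assumes "r \<in> polys V" "p \<in> ideal_gen V S"
  shows "r * p \<in> ideal_gen V S"
proof -
  obtain n :: nat and rr ss where p: "p = (\<Sum>i<n. rr i * ss i)" "\<forall>i<n. rr i \<in> polys V \<and> ss i \<in> S"
    using assms(2) unfolding ig_iff by blast
  have "r * p = (\<Sum>i<n. (r * rr i) * ss i)" by (simp add: p(1) sum_distrib_left mult.assoc)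
  moreover have "\<forall>i<n. r * rr i \<in> polys V \<and> ss i \<in> S" using p(2) assms(1) by (auto intro: polys_mult)
  ultimately show ?thesis unfolding ig_iff by (intro exI[of _ n] exI[of _ "\<lambda>i. r * rr i"] exI[of _ ss]) auto
qed

lemma ig_base: "s \<in> S \<Longrightarrow> s \<in> ideal_gen V S"
  using ig_snoc[of 0 V S 1 s] by simp

lemma ig_Const_mult: "p \<in> ideal_gen V S \<Longrightarrow> Const c * p \<in> ideal_gen V S"
  by (rule ig_mult) auto

lemma ig_sum: "(\<And>i. i \<in> A \<Longrightarrow> f i \<in> ideal_gen V S) \<Longrightarrow> sum f A \<in> ideal_gen V S"
  by (induct A rule: infinite_finite_induct) (auto intro: ig_add)

lemma ig_sub:
  assumes "T \<subseteq> ideal_gen V S"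
  shows "ideal_gen V T \<subseteq> ideal_gen V S"
proof
  fix p assume "p \<in> ideal_gen V T"
  then obtain n :: nat and rr ss where p: "p = (\<Sum>i<n. rr i * ss i)" "\<forall>i<n. rr i \<in> polys V \<and> ss i \<in> T"
    unfolding ig_iff by blast
  show "p \<in> ideal_gen V S" unfolding p(1) using p(2) assms by (intro ig_sum ig_mult) auto
qed

lemma ig_mono: "S \<subseteq> T \<Longrightarrow> ideal_gen V S \<subseteq> ideal_gen V T"
  by (rule ig_sub) (auto intro: ig_base)

lemma ig_act:
  assumes gen: "\<And>x. x \<in> V \<Longrightarrow> gen g x \<in> polys V"
    and S: "\<And>s. s \<in> S \<Longrightarrow> act gen g s \<in> ideal_gen V S"
    and p: "p \<in> ideal_gen V S"
  shows "act gen g p \<in> ideal_gen V S"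
proof -
  obtain n :: nat and rr ss where p: "p = (\<Sum>i<n. rr i * ss i)" "\<forall>i<n. rr i \<in> polys V \<and> ss i \<in> S"
    using p unfolding ig_iff by blast
  show ?thesis unfolding p(1) act_sum act_mult
    using p(2) by (intro ig_sum ig_add ig_mult S act_polys[where V=V and gen=gen and g=g, OF gen]) (auto intro: ig_base)
qed

lemma ig_polys: "S \<subseteq> polys V \<Longrightarrow> ideal_gen V S \<subseteq> polys V"
  unfolding ideal_gen_def by (auto intro!: polys_sum polys_mult)


lemma span_iff: "p \<in> span_of m w \<longleftrightarrow> (\<exists>c. p = (\<Sum>i\<le>m. Const (c i) * w i))"
  unfolding span_of_def by blast

lemma span_zero: "0 \<in> span_of m w"
  unfolding span_iff by (rule exI[of _ "\<lambda>_. 0"]) simp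

lemma span_add: "p \<in> span_of m w \<Longrightarrow> q \<in> span_of m w \<Longrightarrow> p + q \<in> span_of m w"
  unfolding span_iff
proof (elim exE)
  fix c d assume "p = (\<Sum>i\<le>m. Const (c i) * w i)" "q = (\<Sum>i\<le>m. Const (d i) * w i)"
  then show "\<exists>e. p + q = (\<Sum>i\<le>m. Const (e i) * w i)"
    by (intro exI[of _ "\<lambda>i. c i + d i"]) (simp add: Const_add distrib_right sum.distrib)
qed

lemma span_Const_mult: "p \<in> span_of m w \<Longrightarrow> Const a * p \<in> span_of m w"
  unfolding span_iff
proof (elim exE)
  fix c assume "p = (\<Sum>i\<le>m. Const (c i) * w i)"
  then show "\<exists>e. Const a * p = (\<Sum>i\<le>m. Const (e i) * w i)"
    by (intro exI[of _ "\<lambda>i. a * c i"]) (simp add: Const_mult sum_distrib_left mult.assoc)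
qed

lemma span_sum: "(\<And>i. i \<in> A \<Longrightarrow> f i \<in> span_of m w) \<Longrightarrow> sum f A \<in> span_of m w"
  by (induct A rule: infinite_finite_induct) (auto intro: span_add span_zero)

lemma span_basis: "j \<le> m \<Longrightarrow> w j \<in> span_of m w"
  unfolding span_iff
proof (intro exI[of _ "\<lambda>i. if i = j then 1 else 0"])
  assume "j \<le> m"
  have "(\<Sum>i\<le>m. Const (if i = j then 1 else 0) * w i) = (\<Sum>i\<le>m. if i = j then w i else 0)"
    by (rule sum.cong) auto
  also have "\<dots> = w j" using \<open>j \<le> m\<close> by simp
  finally show "w j = (\<Sum>i\<le>m. Const (if i = j then 1 else 0) * w i)" by simp
qed

lemma span_act_basis:
  assumes "is_Lcopy V (act gen) m w" "i \<le> m"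
  shows "act gen g (w i) \<in> span_of m w"
proof (cases g)
  case E then show ?thesis using assms unfolding is_Lcopy_def
    by (auto intro!: span_Const_mult span_basis span_zero)
next
  case H then show ?thesis using assms unfolding is_Lcopy_def
    by (auto intro!: span_Const_mult span_basis span_zero)
next
  case F then show ?thesis using assms unfolding is_Lcopy_def
    by (auto intro!: span_Const_mult span_basis span_zero)
qed

lemma span_act:
  assumes "is_Lcopy V (act gen) m w" "p \<in> span_of m w"
  shows "act gen g p \<in> span_of m w"
proof -
  obtain c where p: "p = (\<Sum>i\<le>m. Const (c i) * w i)" using assms(2) unfolding span_iff by blast
  show ?thesis unfolding p act_sum act_Const_mult
    using assms(1) by (intro span_sum span_Const_mult span_act_basis) auto
qed

lemma span_polys: "is_Lcopy V A m w \<Longrightarrow> p \<in> span_of m w \<Longrightarrow> p \<in> polys V"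
  unfolding span_iff is_Lcopy_def by (auto intro!: polys_sum polys_mult)

lemma iso_iff: "p \<in> isotypic V A m \<longleftrightarrow> (\<exists>(n::nat) u. p = (\<Sum>j<n. u j) \<and> (\<forall>j<n. \<exists>w. is_Lcopy V A m w \<and> u j \<in> span_of m w))"
  unfolding isotypic_def by blast

lemma iso_zero: "0 \<in> isotypic V A m"
  unfolding iso_iff by (rule exI[of _ 0]) auto

lemma iso_snoc:
  assumes "p \<in> isotypic V A m" "is_Lcopy V A m w" "q \<in> span_of m w"
  shows "p + q \<in> isotypic V A m"
proof -
  obtain n :: nat and u where p: "p = (\<Sum>j<n. u j)" "\<forall>j<n. \<exists>w. is_Lcopy V A m w \<and> u j \<in> span_of m w"
    using assms(1) unfolding iso_iff by blast
  have "p + q = (\<Sum>j<Suc n. (u(n := q)) j)" using p(1) by simp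
  moreover have "\<forall>j<Suc n. \<exists>w. is_Lcopy V A m w \<and> (u(n := q)) j \<in> span_of m w"
    using p(2) assms by (auto simp: less_Suc_eq)
  ultimately show ?thesis unfolding iso_iff by blast
qed

lemma iso_span: "is_Lcopy V A m w \<Longrightarrow> q \<in> span_of m w \<Longrightarrow> q \<in> isotypic V A m"
  using iso_snoc[OF iso_zero] by fastforce

lemma iso_add:
  assumes "p \<in> isotypic V A m" "q \<in> isotypic V A m"
  shows "p + q \<in> isotypic V A m"
proof -
  obtain n :: nat and u where q: "q = (\<Sum>j<n. u j)" "\<forall>j<n. \<exists>w. is_Lcopy V A m w \<and> u j \<in> span_of m w"
    using assms(2) unfolding iso_iff by blast
  have "\<forall>k\<le>n. p + (\<Sum>j<k. u j) \<in> isotypic V A m"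
  proof (intro allI impI)
    fix k assume "k \<le> n"
    then show "p + (\<Sum>j<k. u j) \<in> isotypic V A m"
    proof (induct k)
      case 0 then show ?case using assms(1) by simp
    next
      case (Suc k)
      have "k < n" using Suc(2) by simp
      then obtain w where "is_Lcopy V A m w" "u k \<in> span_of m w" using q(2) by blast
      then have "p + (\<Sum>j<k. u j) + u k \<in> isotypic V A m"
        using Suc by (intro iso_snoc[of "p + (\<Sum>j<k. u j)"]) auto
      then show ?case by (simp add: add.assoc)
    qed
  qed
  then show ?thesis using q(1) by auto
qed

lemma iso_sum: "(\<And>i. i \<in> B \<Longrightarrow> f i \<in> isotypic V A m) \<Longrightarrow> sum f B \<in> isotypic V A m"
  by (induct B rule: infinite_finite_induct) (auto intro: iso_add iso_zero)

lemma iso_lin: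
  assumes "\<And>w q. is_Lcopy V A m w \<Longrightarrow> q \<in> span_of m w \<Longrightarrow> Fn q \<in> isotypic V A m"
    and "\<And>a b. Fn (a + b) = Fn a + Fn b" and "Fn 0 = 0"
    and "p \<in> isotypic V A m"
  shows "Fn p \<in> isotypic V A m"
proof -
  obtain n :: nat and u where p: "p = (\<Sum>j<n. u j)" "\<forall>j<n. \<exists>w. is_Lcopy V A m w \<and> u j \<in> span_of m w"
    using assms(4) unfolding iso_iff by blast
  have lin: "Fn (sum u K) = (\<Sum>j\<in>K. Fn (u j))" for K
    by (induct K rule: infinite_finite_induct) (auto simp: assms(2,3))
  show ?thesis unfolding p(1) lin using p(2) assms(1) by (intro iso_sum) auto
qed

lemma iso_Const_mult: "p \<in> isotypic V A m \<Longrightarrow> Const c * p \<in> isotypic V A m"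
  by (rule iso_lin[where Fn = "\<lambda>p. Const c * p"]) (auto intro: iso_span span_Const_mult simp: distrib_left)

lemma iso_act: "p \<in> isotypic V (act gen) m \<Longrightarrow> act gen g p \<in> isotypic V (act gen) m"
  by (rule iso_lin[where Fn = "act gen g"]) (auto intro: iso_span span_act simp: act_add)

lemma iso_polys: "p \<in> isotypic V A m \<Longrightarrow> p \<in> polys V"
  unfolding iso_iff by (auto intro!: polys_sum dest: span_polys)

lemma submod_iso:
  assumes "S \<subseteq> isotypic V (act gen) m"
  shows "submod_gen (act gen) S \<subseteq> isotypic V (act gen) m"
proof
  fix p assume "p \<in> submod_gen (act gen) S"
  then show "p \<in> isotypic V (act gen) m"
    by induct (use assms in \<open>auto intro: iso_zero iso_add iso_Const_mult iso_act\<close>)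
qed


lemma Const_numeral [simp]: "Const (numeral n) = numeral n" by (simp add: Const_def)
lemma Const_neg_numeral [simp]: "Const (- numeral n) = - numeral n" by (simp add: Const_def single_uminus)
lemma lookup_numeral_mult:
  fixes p :: "('v, 'k::comm_ring_1) mpoly"
  shows "Poly_Mapping.lookup (numeral n * p) a = numeral n * Poly_Mapping.lookup p a"
  using lookup_Const_mult[of "numeral n" p a] by simp
lemma polys_numeral [simp]: "numeral n \<in> polys V" using polys_Const[of "numeral n" V] by simp
lemma polys_diff: "p \<in> polys V \<Longrightarrow> q \<in> polys V \<Longrightarrow> p - q \<in> polys V"
  using polys_add[of p V "- q"] polys_uminus[of q V] by simp

lemma all_le4: "(\<forall>i\<le>(4::nat). P i) \<longleftrightarrow> P 0 \<and> P 1 \<and> P 2 \<and> P 3 \<and> P 4"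
proof
  assume "P 0 \<and> P 1 \<and> P 2 \<and> P 3 \<and> P 4"
  moreover have "i \<le> 4 \<Longrightarrow> i = 0 \<or> i = 1 \<or> i = 2 \<or> i = 3 \<or> i = 4" for i :: nat by arith
  ultimately show "\<forall>i\<le>4. P i" by auto
qed auto

lemma sum_le4: "(\<Sum>i\<le>(4::nat). f i) = f 0 + f 1 + f 2 + f 3 + f 4"
  by (simp add: numeral_eq_Suc atMost_Suc add_ac)

definition L4w :: "('b \<times> sl2b \<Rightarrow> 'v) \<Rightarrow> 'b \<Rightarrow> 'b \<Rightarrow> nat \<Rightarrow> ('v, 'k::comm_ring_1) mpoly" where
  "L4w j b b' i = (let e = Var (j (b, E)); h = Var (j (b, H)); f = Var (j (b, F));
      e' = Var (j (b', E)); h' = Var (j (b', H)); f' = Var (j (b', F)) in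
    [e * e', - (h * e') - e * h', 2 * (h * h') - 2 * (f * e') - 2 * (e * f'),
     6 * (f * h') + 6 * (h * f'), 24 * (f * f')] ! i)"

context
  fixes gen :: "sl2b \<Rightarrow> 'v \<Rightarrow> ('v, 'k::field_char_0) mpoly" and j :: "'b \<times> sl2b \<Rightarrow> 'v" and b b' :: 'b
  assumes hj: "\<And>bb s g. gen g (j (bb, s)) = (case ad g s of (c, t) \<Rightarrow> Const (of_int c) * Var (j (bb, t)))"
begin

lemma actj: 
  "act gen E (Var (j (bb, E))) = 0"
  "act gen E (Var (j (bb, H))) = - 2 * Var (j (bb, E))"
  "act gen E (Var (j (bb, F))) = Var (j (bb, H))"
  "act gen H (Var (j (bb, E))) = 2 * Var (j (bb, E))"
  "act gen H (Var (j (bb, H))) = 0"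
  "act gen H (Var (j (bb, F))) = - 2 * Var (j (bb, F))"
  "act gen F (Var (j (bb, E))) = - Var (j (bb, H))"
  "act gen F (Var (j (bb, H))) = 2 * Var (j (bb, F))"
  "act gen F (Var (j (bb, F))) = 0"
  by (simp_all add: act_Var hj)

lemmas acts = act_mult act_add act_diff act_uminus actj

lemma L4_F:
  "act gen F (L4w j b b' 0) = L4w j b b' (Suc 0)"
  "act gen F (L4w j b b' (Suc 0)) = L4w j b b' 2"
  "act gen F (L4w j b b' 2) = L4w j b b' 3"
  "act gen F (L4w j b b' 3) = L4w j b b' 4"
  "act gen F (L4w j b b' 4) = 0"
  by (simp_all add: L4w_def Let_def acts algebra_simps)

lemma L4_H:
  "act gen H (L4w j b b' 0) = 4 * L4w j b b' 0"
  "act gen H (L4w j b b' (Suc 0)) = 2 * L4w j b b' (Suc 0)"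
  "act gen H (L4w j b b' 2) = 0"
  "act gen H (L4w j b b' 3) = - 2 * L4w j b b' 3"
  "act gen H (L4w j b b' 4) = - 4 * L4w j b b' 4"
  by (simp_all add: L4w_def Let_def acts algebra_simps)

lemma L4_E:
  "act gen E (L4w j b b' 0) = 0"
  "act gen E (L4w j b b' (Suc 0)) = 4 * L4w j b b' 0"
  "act gen E (L4w j b b' 2) = 6 * L4w j b b' (Suc 0)"
  "act gen E (L4w j b b' 3) = 6 * L4w j b b' 2"
  "act gen E (L4w j b b' 4) = 4 * L4w j b b' 3"
  by (simp_all add: L4w_def Let_def acts algebra_simps)

lemma L4_w4_nz: "L4w j b b' 4 \<noteq> (0 :: ('v, 'k) mpoly)"
proof
  assume "L4w j b b' 4 = (0 :: ('v, 'k) mpoly)"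
  then have "Const 24 * Poly_Mapping.single (Poly_Mapping.single (j (b, F)) 1 + Poly_Mapping.single (j (b', F)) 1) (1::'k) = 0"
    by (simp add: L4w_def Var_mult)
  then have "Poly_Mapping.lookup (Const 24 * Poly_Mapping.single (Poly_Mapping.single (j (b, F)) 1 + Poly_Mapping.single (j (b', F)) 1) (1::'k))
     (Poly_Mapping.single (j (b, F)) 1 + Poly_Mapping.single (j (b', F)) 1) = 0" by simp
  then show False by (simp add: lookup_numeral_mult)
qed

lemma L4_indep:
  assumes "(\<Sum>i\<le>4. Const (c i) * L4w j b b' i) = (0 :: ('v, 'k) mpoly)"
  shows "c 0 = 0 \<and> c 1 = 0 \<and> c 2 = 0 \<and> c 3 = 0 \<and> c 4 = 0"
proof -
  let ?w = "L4w j b b' :: nat \<Rightarrow> ('v, 'k) mpoly"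
  let ?F = "act gen F"
  have T: "Const (c 0) * ?w 0 + Const (c 1) * ?w 1 + Const (c 2) * ?w 2 + Const (c 3) * ?w 3 + Const (c 4) * ?w 4 = 0"
    using assms by (simp add: sum_le4)
  have T1: "Const (c 0) * ?w 1 + Const (c 1) * ?w 2 + Const (c 2) * ?w 3 + Const (c 3) * ?w 4 = 0"
    using arg_cong[OF T, of ?F] by (simp add: act_add act_Const_mult L4_F)
  have T2: "Const (c 0) * ?w 2 + Const (c 1) * ?w 3 + Const (c 2) * ?w 4 = 0"
    using arg_cong[OF T1, of ?F] by (simp add: act_add act_Const_mult L4_F)
  have T3: "Const (c 0) * ?w 3 + Const (c 1) * ?w 4 = 0"
    using arg_cong[OF T2, of ?F] by (simp add: act_add act_Const_mult L4_F)
  have T4: "Const (c 0) * ?w 4 = 0"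
    using arg_cong[OF T3, of ?F] by (simp add: act_add act_Const_mult L4_F)
  have c0: "c 0 = 0" using Const_mult_eq_0[OF T4] L4_w4_nz by blast
  have c1: "c 1 = 0" using T3 c0 Const_mult_eq_0[of "c 1" "?w 4"] L4_w4_nz by simp
  have c2: "c 2 = 0" using T2 c0 c1 Const_mult_eq_0[of "c 2" "?w 4"] L4_w4_nz by simp
  have c3: "c 3 = 0" using T1 c0 c1 c2 Const_mult_eq_0[of "c 3" "?w 4"] L4_w4_nz by simp
  have c4: "c 4 = 0" using T c0 c1 c2 c3 Const_mult_eq_0[of "c 4" "?w 4"] L4_w4_nz by simp
  show ?thesis using c0 c1 c2 c3 c4 by blast
qed

lemma L4_Lcopy:
  assumes "\<And>s. j (b, s) \<in> V" "\<And>s. j (b', s) \<in> V"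
  shows "is_Lcopy V (act gen) 4 (L4w j b b' :: nat \<Rightarrow> ('v, 'k) mpoly)"
  unfolding is_Lcopy_def all_le4
proof (intro conjI allI impI)
  show "L4w j b b' 0 \<in> polys V" "L4w j b b' 1 \<in> polys V" "L4w j b b' 2 \<in> polys V"
    "L4w j b b' 3 \<in> polys V" "L4w j b b' 4 \<in> polys V"
    by (simp_all add: L4w_def assms polys_Var polys_mult polys_diff polys_uminus polys_add)
next
  fix c assume "(\<Sum>i\<le>4. Const (c i) * L4w j b b' i) = (0 :: ('v, 'k) mpoly)"
  from L4_indep[OF this] show "c 0 = 0" "c 1 = 0" "c 2 = 0" "c 3 = 0" "c 4 = 0" by auto
qed (simp_all add: L4_F L4_H L4_E, simp add: eval_nat_numeral)

lemma L4_iso: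
  assumes "\<And>s. j (b, s) \<in> V" "\<And>s. j (b', s) \<in> V"
  shows "Var (j (b, E)) * Var (j (b', E)) \<in> isotypic V (act gen) 4"
proof -
  have "L4w j b b' 0 \<in> span_of 4 (L4w j b b' :: nat \<Rightarrow> ('v, 'k) mpoly)" by (rule span_basis) simp
  then show ?thesis using iso_span[OF L4_Lcopy[OF assms]] by (simp add: L4w_def)
qed

end

definition cw :: "'a + 'b \<times> sl2b \<Rightarrow> int" where
  "cw x = (case x of Inl _ \<Rightarrow> 0 | Inr (_, s) \<Rightarrow> (case s of E \<Rightarrow> 1 | H \<Rightarrow> 0 | F \<Rightarrow> -1))"

definition wt :: "('a + 'b \<times> sl2b \<Rightarrow>\<^sub>0 nat) \<Rightarrow> int" where
  "wt a = (\<Sum>x\<in>Poly_Mapping.keys a. cw x * int (Poly_Mapping.lookup a x))"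

lemma gen_U_H: "gen_U H x = Const (of_int (2 * cw x)) * Var x"
  by (cases x) (auto simp: gen_U_def cw_def split: sl2b.splits)

lemma pd_times_Var:
  assumes "x \<in> Poly_Mapping.keys a"
  shows "pd x (Poly_Mapping.single a c) * Var x = Poly_Mapping.single a (of_nat (Poly_Mapping.lookup a x) * (c::'k::comm_ring_1))"
proof -
  obtain a' where a: "a = a' + Poly_Mapping.single x 1" using split_key[of a x] assms by (auto simp: in_keys_iff)
  show ?thesis by (simp only: a pd_single_succ) (simp add: Var_def mult_single lookup_add)
qed

lemma single_sum: "Poly_Mapping.single k (sum f A) = (\<Sum>x\<in>A. Poly_Mapping.single k (f x))"
  by (induct A rule: infinite_finite_induct) (auto simp: single_add)

lemma actH_single:
  "act (gen_U :: sl2b \<Rightarrow> 'a + 'b \<times> sl2b \<Rightarrow> ('a + 'b \<times> sl2b, 'k::comm_ring_1) mpoly) H (Poly_Mapping.single a c)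
     = Poly_Mapping.single a (of_int (2 * wt a) * c)"
proof -
  have "act (gen_U :: sl2b \<Rightarrow> 'a + 'b \<times> sl2b \<Rightarrow> ('a + 'b \<times> sl2b, 'k) mpoly) H (Poly_Mapping.single a c)
     = (\<Sum>x\<in>Poly_Mapping.keys a. pd x (Poly_Mapping.single a c) * gen_U H x)"
    using vars_single[of a c] by (intro act_superset) auto
  also have "\<dots> = (\<Sum>x\<in>Poly_Mapping.keys a. Const (of_int (2 * cw x)) * (pd x (Poly_Mapping.single a c) * Var x))"
    by (simp add: gen_U_H ac_simps)
  also have "\<dots> = (\<Sum>x\<in>Poly_Mapping.keys a. Poly_Mapping.single a (of_int (2 * cw x) * (of_nat (Poly_Mapping.lookup a x) * c)))"
    by (rule sum.cong) (simp_all add: pd_times_Var Const_def mult_single)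
  also have "\<dots> = Poly_Mapping.single a (\<Sum>x\<in>Poly_Mapping.keys a. of_int (2 * cw x) * (of_nat (Poly_Mapping.lookup a x) * c))"
    by (simp add: single_sum)
  also have "(\<Sum>x\<in>Poly_Mapping.keys a. of_int (2 * cw x) * (of_nat (Poly_Mapping.lookup a x) * c)) = of_int (2 * wt a) * c"
    by (simp add: wt_def sum_distrib_left sum_distrib_right of_int_sum mult.assoc)
  finally show ?thesis .
qed

lemma lookup_actH:
  "Poly_Mapping.lookup (act (gen_U :: sl2b \<Rightarrow> 'a + 'b \<times> sl2b \<Rightarrow> ('a + 'b \<times> sl2b, 'k::comm_ring_1) mpoly) H p) a
    = of_int (2 * wt a) * Poly_Mapping.lookup p a"
proof (induct p rule: mp_induct)
  case zero then show ?case by simp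
next
  case (add b c p)
  then show ?case by (simp add: act_add lookup_add actH_single lookup_single when_def distrib_left)
qed

lemma mp_sum_monos: "p = (\<Sum>a\<in>Poly_Mapping.keys p. Poly_Mapping.single a (Poly_Mapping.lookup p a))"
proof (rule poly_mapping_eqI)
  fix k
  show "Poly_Mapping.lookup p k = Poly_Mapping.lookup (\<Sum>a\<in>Poly_Mapping.keys p. Poly_Mapping.single a (Poly_Mapping.lookup p a)) k"
    by (simp add: lookup_sum lookup_single when_def in_keys_iff)
qed

definition isE :: "'a + 'b \<times> sl2b \<Rightarrow> bool" where "isE x \<longleftrightarrow> (\<exists>b. x = Inr (b, E))"

lemma wt_K: "finite K \<Longrightarrow> Poly_Mapping.keys a \<subseteq> K \<Longrightarrow> wt a = (\<Sum>x\<in>K. cw x * int (Poly_Mapping.lookup a x))"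
  unfolding wt_def by (rule sum.mono_neutral_left) (auto simp: in_keys_iff)

lemma cw_le: "cw x * int n \<le> (if isE x then int n else 0)"
  by (cases x) (auto simp: cw_def isE_def split: sl2b.splits)

lemma wt_le:
  assumes "finite K" "Poly_Mapping.keys a \<subseteq> K"
  shows "wt a \<le> (\<Sum>x\<in>{x\<in>K. isE x}. int (Poly_Mapping.lookup a x))"
proof -
  have "wt a = (\<Sum>x\<in>K. cw x * int (Poly_Mapping.lookup a x))" using wt_K[OF assms] .
  also have "\<dots> \<le> (\<Sum>x\<in>K. if isE x then int (Poly_Mapping.lookup a x) else 0)"
    by (rule sum_mono) (rule cw_le)
  also have "\<dots> = (\<Sum>x\<in>{x\<in>K. isE x}. int (Poly_Mapping.lookup a x))"
    using assms(1) by (simp add: sum.inter_filter)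
  finally show ?thesis .
qed

lemma cnt_split:
  assumes "finite K" "x \<in> K" "isE x"
  shows "(\<Sum>y\<in>{y\<in>K. isE y}. int (Poly_Mapping.lookup (a + Poly_Mapping.single x 1) y))
       = (\<Sum>y\<in>{y\<in>K. isE y}. int (Poly_Mapping.lookup a y)) + 1"
proof -
  have "(\<Sum>y\<in>{y\<in>K. isE y}. int (Poly_Mapping.lookup (a + Poly_Mapping.single x 1) y))
     = (\<Sum>y\<in>{y\<in>K. isE y}. int (Poly_Mapping.lookup a y)) + (\<Sum>y\<in>{y\<in>K. isE y}. if y = x then 1 else 0)"
    unfolding sum.distrib[symmetric] by (rule sum.cong) (auto simp: lookup_add lookup_single when_def)
  also have "(\<Sum>y\<in>{y\<in>K. isE y}. if y = x then 1 else 0) = (1::int)"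
    using assms by (simp add: sum.delta')
  finally show ?thesis .
qed

lemma exists_E:
  assumes "finite K" "(\<Sum>y\<in>{y\<in>K. isE y}. int (Poly_Mapping.lookup a y)) \<ge> 1"
  shows "\<exists>x\<in>K. isE x \<and> Poly_Mapping.lookup a x \<noteq> 0"
proof (rule ccontr)
  assume "\<not> ?thesis"
  then have "(\<Sum>y\<in>{y\<in>K. isE y}. int (Poly_Mapping.lookup a y)) = 0" by (intro sum.neutral) auto
  with assms(2) show False by simp
qed

lemma two_E:
  fixes a :: "'a + 'b \<times> sl2b \<Rightarrow>\<^sub>0 nat"
  assumes "Poly_Mapping.keys a \<subseteq> vars_U IA IB" "2 * wt a = int m" "m \<noteq> 0" "m \<noteq> 2"
  shows "\<exists>c b b'. b \<in> IB \<and> b' \<in> IB \<and> a = c + Poly_Mapping.single (Inr (b, E)) 1 + Poly_Mapping.single (Inr (b', E)) 1"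
proof -
  let ?K = "Poly_Mapping.keys a"
  let ?cnt = "\<lambda>a. (\<Sum>y\<in>{y\<in>?K. isE y}. int (Poly_Mapping.lookup a y))"
  have "int m \<noteq> 0" "int m \<noteq> 2" using assms(3,4) by simp_all
  then have "wt a \<ge> 2" using assms(2) by presburger
  then have c2: "?cnt a \<ge> 2" using wt_le[of ?K a] by simp
  then obtain x where x: "x \<in> ?K" "isE x" "Poly_Mapping.lookup a x \<noteq> 0" using exists_E[of ?K a] by auto
  obtain a' where a': "a = a' + Poly_Mapping.single x 1" using split_key[OF x(3)] by blast
  have "?cnt (a' + Poly_Mapping.single x 1) = ?cnt a' + 1" by (rule cnt_split) (use x in auto)
  moreover have "?cnt a = ?cnt (a' + Poly_Mapping.single x 1)" using a' by (rule arg_cong[where f = ?cnt])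
  ultimately have "?cnt a = ?cnt a' + 1" by simp
  then have "?cnt a' \<ge> 1" using c2 by linarith
  then obtain y where y: "y \<in> ?K" "isE y" "Poly_Mapping.lookup a' y \<noteq> 0" using exists_E[of ?K a'] by auto
  obtain c where c: "a' = c + Poly_Mapping.single y 1" using split_key[OF y(3)] by blast
  obtain b where b: "x = Inr (b, E)" using x(2) by (auto simp: isE_def)
  obtain b' where b': "y = Inr (b', E)" using y(2) by (auto simp: isE_def)
  have "b \<in> IB" "b' \<in> IB" using x(1) y(1) assms(1) b b' by (auto simp: vars_U_def)
  moreover have "a = c + Poly_Mapping.single (Inr (b', E)) 1 + Poly_Mapping.single (Inr (b, E)) 1"
    using a' c b b' by simp
  ultimately show ?thesis by blast
qed

lemma hw_in_ideal:
  fixes p :: "('a + 'b \<times> sl2b, 'k::field_char_0) mpoly"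
  assumes "p \<in> polys (vars_U IA IB)" "act gen_U H p = Const (of_int (int m)) * p" "m \<noteq> 0" "m \<noteq> 2"
  shows "p \<in> ideal_gen (vars_U IA IB) {Var (Inr (b, E)) * Var (Inr (b', E)) | b b'. b \<in> IB \<and> b' \<in> IB}"
proof (subst mp_sum_monos, rule ig_sum)
  fix a assume a: "a \<in> Poly_Mapping.keys p"
  have "Poly_Mapping.lookup (act gen_U H p) a = Poly_Mapping.lookup (Const (of_int (int m)) * p) a"
    using assms(2) by simp
  then have "of_int (2 * wt a) * Poly_Mapping.lookup p a = (of_int (int m) :: 'k) * Poly_Mapping.lookup p a"
    by (simp only: lookup_actH lookup_Const_mult)
  then have "(of_int (2 * wt a) :: 'k) = of_int (int m)" using a by (simp add: in_keys_iff)
  then have w: "2 * wt a = int m" by (simp only: of_int_eq_iff)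
  have ka: "Poly_Mapping.keys a \<subseteq> vars_U IA IB" using a assms(1) by (force simp: polys_def vars_def)
  obtain c b b' where cb: "b \<in> IB" "b' \<in> IB"
    "a = c + Poly_Mapping.single (Inr (b, E)) 1 + Poly_Mapping.single (Inr (b', E)) 1"
    using two_E[OF ka w assms(3,4)] by blast
  have eq: "Poly_Mapping.single a (Poly_Mapping.lookup p a) = Poly_Mapping.single c (Poly_Mapping.lookup p a) * (Var (Inr (b, E)) * Var (Inr (b', E)))"
    by (simp add: cb(3) Var_def mult_single add.assoc)
  have pc: "Poly_Mapping.single c (Poly_Mapping.lookup p a) \<in> polys (vars_U IA IB)"
    using vars_single[of c] ka cb(3) by (auto simp: polys_def keys_add_nat)
  have "Var (Inr (b, E)) * Var (Inr (b', E)) \<in> {Var (Inr (b, E)) * Var (Inr (b', E)) | b b'. b \<in> IB \<and> b' \<in> IB}"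
    using cb by blast
  then show "Poly_Mapping.single a (Poly_Mapping.lookup p a) \<in> ideal_gen (vars_U IA IB) {Var (Inr (b, E)) * Var (Inr (b', E)) | b b'. b \<in> IB \<and> b' \<in> IB}"
    unfolding eq by (intro ig_mult[OF pc] ig_base)
qed


lemma gen_U_polys:
  assumes "x \<in> vars_U IA IB" shows "gen_U g x \<in> polys (vars_U IA IB)"
proof (cases x)
  case (Inl a) then show ?thesis by (simp add: gen_U_def)
next
  case (Inr y)
  obtain b s where y: "y = (b, s)" by (cases y)
  have b: "b \<in> IB" using assms Inr y by (auto simp: vars_U_def)
  obtain c t where ct: "ad g s = (c, t)" by (cases "ad g s")
  have "Var (Inr (b, t)) \<in> polys (vars_U IA IB)" using b by (intro polys_Var) (auto simp: vars_U_def)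
  then have "of_int c * Var (Inr (b, t)) \<in> polys (vars_U IA IB)" by (rule polys_mult[OF polys_of_int])
  then show ?thesis using Inr y ct by (simp add: gen_U_def)
qed

lemma gen_B_polys:
  assumes "x \<in> IB \<times> UNIV" shows "gen_B g x \<in> polys (IB \<times> UNIV)"
proof -
  obtain b s where y: "x = (b, s)" by (cases x)
  have b: "b \<in> IB" using assms y by auto
  obtain c t where ct: "ad g s = (c, t)" by (cases "ad g s")
  have "Var (b, t) \<in> polys (IB \<times> UNIV)" using b by (intro polys_Var) auto
  then have "of_int c * Var (b, t) \<in> polys (IB \<times> UNIV)" by (rule polys_mult[OF polys_of_int])
  then show ?thesis using y ct by (simp add: gen_B_def)
qed

lemma hj_U: "gen_U g (Inr (bb, s)) = (case ad g s of (c, t) \<Rightarrow> Const (of_int c) * Var (Inr (bb, t)))"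
  by (simp add: gen_U_def)

lemma hj_B: "gen_B g (bb, s) = (case ad g s of (c, t) \<Rightarrow> Const (of_int c) * Var (bb, t))"
  by (simp add: gen_B_def)

lemma ig_submod_act:
  assumes "\<And>x. x \<in> V \<Longrightarrow> gen g x \<in> polys V" "p \<in> ideal_gen V (submod_gen (act gen) S)"
  shows "act gen g p \<in> ideal_gen V (submod_gen (act gen) S)"
proof (rule ig_act[where V=V and gen=gen and g=g and S="submod_gen (act gen) S", OF assms(1) _ assms(2)])
  fix s assume "s \<in> submod_gen (act gen) S"
  then have "act gen g s \<in> submod_gen (act gen) S" by (rule submod_gen.action)
  then show "act gen g s \<in> ideal_gen V (submod_gen (act gen) S)" by (rule ig_base)
qed

lemma eq1:
  fixes IA :: "'a set" and IB :: "'b set"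
  defines "V \<equiv> vars_U IA IB"
      and "AU \<equiv> act (gen_U :: sl2b \<Rightarrow> 'a + 'b \<times> sl2b \<Rightarrow> ('a + 'b \<times> sl2b, 'k::field_char_0) mpoly)"
  shows "tkk_ideal V AU =
           ideal_gen V (submod_gen AU {Var (Inr (b, E)) * Var (Inr (b', E)) | b b'. b \<in> IB \<and> b' \<in> IB})"
proof
  let ?G = "{Var (Inr (b, E)) * Var (Inr (b', E)) | b b'. b \<in> IB \<and> b' \<in> IB} :: ('a + 'b \<times> sl2b, 'k) mpoly set"
  let ?I = "ideal_gen V (submod_gen AU ?G)"
  have actI: "p \<in> ?I \<Longrightarrow> AU g p \<in> ?I" for p g
    unfolding AU_def V_def by (rule ig_submod_act) (auto intro: gen_U_polys simp: V_def AU_def)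
  have GI: "ideal_gen V ?G \<subseteq> ?I" by (rule ig_mono) (auto intro: submod_gen.base)
  have isoI: "isotypic V AU m \<subseteq> ?I" if m: "m \<noteq> 0" "m \<noteq> 2" for m
  proof
    fix p assume "p \<in> isotypic V AU m"
    then obtain n :: nat and u where p: "p = (\<Sum>j<n. u j)" "\<forall>j<n. \<exists>w. is_Lcopy V AU m w \<and> u j \<in> span_of m w"
      unfolding iso_iff by blast
    have spanI: "q \<in> ?I" if w: "is_Lcopy V AU m w" and q: "q \<in> span_of m w" for w q
    proof -
      have w0: "w 0 \<in> ?I"
      proof -
        have "w 0 \<in> polys V" "AU H (w 0) = Const (of_int (int m)) * w 0" using w unfolding is_Lcopy_def by auto
        then have "w 0 \<in> ideal_gen V ?G" unfolding V_def AU_def using hw_in_ideal m by blast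
        then show ?thesis using GI by blast
      qed
      have wi: "i \<le> m \<Longrightarrow> w i \<in> ?I" for i
      proof (induct i)
        case 0 then show ?case using w0 by simp
      next
        case (Suc i)
        then have "AU F (w i) = w (Suc i)" using w unfolding is_Lcopy_def by auto
        then show ?case using Suc actI[of "w i" F] by simp
      qed
      obtain c where "q = (\<Sum>i\<le>m. Const (c i) * w i)" using q unfolding span_iff by blast
      then show ?thesis using wi by (auto intro!: ig_sum ig_Const_mult)
    qed
    show "p \<in> ?I" unfolding p(1) using p(2) spanI by (auto intro!: ig_sum)
  qed
  show "tkk_ideal V AU \<subseteq> ?I" unfolding tkk_ideal_def by (rule ig_sub) (use isoI in auto)
next
  let ?G = "{Var (Inr (b, E)) * Var (Inr (b', E)) | b b'. b \<in> IB \<and> b' \<in> IB} :: ('a + 'b \<times> sl2b, 'k) mpoly set"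
  have "?G \<subseteq> isotypic V AU 4"
  proof
    fix p assume "p \<in> ?G"
    then obtain b b' where "b \<in> IB" "b' \<in> IB" "p = Var (Inr (b, E)) * Var (Inr (b', E))" by blast
    then show "p \<in> isotypic V AU 4" unfolding AU_def V_def
      by (auto intro!: L4_iso[where j = Inr] hj_U simp: vars_U_def)
  qed
  then have "submod_gen AU ?G \<subseteq> isotypic V AU 4" unfolding AU_def by (rule submod_iso)
  also have "\<dots> \<subseteq> tkk_ideal V AU" unfolding tkk_ideal_def
  proof (rule subsetI, rule ig_base)
    fix x assume x: "x \<in> isotypic V AU 4"
    have "(4::nat) \<in> {m. m \<noteq> 0 \<and> m \<noteq> 2}" by simp
    with x show "x \<in> (\<Union>m\<in>{m. m \<noteq> 0 \<and> m \<noteq> 2}. isotypic V AU m)" by blast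
  qed
  finally show "ideal_gen V (submod_gen AU ?G) \<subseteq> tkk_ideal V AU"
    unfolding tkk_ideal_def by (rule ig_sub)
qed


definition em :: "('b \<times> sl2b \<Rightarrow>\<^sub>0 nat) \<Rightarrow> ('a + 'b \<times> sl2b \<Rightarrow>\<^sub>0 nat)" where
  "em a = (\<Sum>x\<in>Poly_Mapping.keys a. Poly_Mapping.single (Inr x) (Poly_Mapping.lookup a x))"

lemma lookup_em_Inr [simp]: "Poly_Mapping.lookup (em a) (Inr x) = Poly_Mapping.lookup a x"
  by (auto simp: em_def lookup_sum lookup_single when_def in_keys_iff)

lemma lookup_em_Inl [simp]: "Poly_Mapping.lookup (em a) (Inl y) = 0"
  by (auto simp: em_def lookup_sum lookup_single when_def)

lemma em_eqI: "(\<And>x. Poly_Mapping.lookup f (Inr x) = Poly_Mapping.lookup g (Inr x)) \<Longrightarrow>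
   (\<And>y. Poly_Mapping.lookup f (Inl y) = Poly_Mapping.lookup g (Inl y)) \<Longrightarrow> f = g"
  by (rule poly_mapping_eqI) (case_tac k, auto)

lemma em_add: "em (a + b) = em a + em b"
  by (rule em_eqI) (simp_all add: lookup_add)

lemma em_zero [simp]: "em 0 = 0"
  by (rule em_eqI) simp_all

lemma em_single: "em (Poly_Mapping.single x n) = Poly_Mapping.single (Inr x) n"
  by (rule em_eqI) (simp_all add: lookup_single when_def)

lemma em_inj: "em a = em b \<Longrightarrow> a = b"
  by (rule poly_mapping_eqI) (metis lookup_em_Inr)

lemma keys_em: "Poly_Mapping.keys (em a) = Inr ` Poly_Mapping.keys a"
proof -
  have "k \<in> Poly_Mapping.keys (em a) \<longleftrightarrow> k \<in> Inr ` Poly_Mapping.keys a" for k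
    by (cases k) (auto simp: in_keys_iff)
  then show ?thesis by blast
qed

lemma embed_alt: "embed q = (\<Sum>a\<in>Poly_Mapping.keys q. Poly_Mapping.single (em a) (Poly_Mapping.lookup q a))"
  unfolding embed_def em_def ..

lemma lookup_embed_em [simp]: "Poly_Mapping.lookup (embed q) (em b) = Poly_Mapping.lookup q b"
proof -
  have "Poly_Mapping.lookup (embed q) (em b) = (\<Sum>a\<in>Poly_Mapping.keys q. if a = b then Poly_Mapping.lookup q a else 0)"
    unfolding embed_alt lookup_sum by (rule sum.cong) (auto simp: lookup_single when_def dest: em_inj)
  also have "\<dots> = Poly_Mapping.lookup q b" by (simp add: in_keys_iff)
  finally show ?thesis .
qed

lemma lookup_embed_other: "k \<notin> range em \<Longrightarrow> Poly_Mapping.lookup (embed q) k = 0"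
  unfolding embed_alt lookup_sum by (rule sum.neutral) (auto simp: lookup_single when_def)

lemma embed_eqI:
  assumes "\<And>b. Poly_Mapping.lookup f (em b) = Poly_Mapping.lookup g (em b)"
    and "\<And>k. k \<notin> range em \<Longrightarrow> Poly_Mapping.lookup f k = Poly_Mapping.lookup g k"
  shows "f = g"
  by (rule poly_mapping_eqI) (metis assms rangeE)

lemma embed_add: "embed (p + q) = embed p + embed q"
  by (rule embed_eqI) (simp_all add: lookup_add lookup_embed_other)

lemma embed_zero [simp]: "embed 0 = 0"
  by (simp add: embed_def)

lemma embed_single: "embed (Poly_Mapping.single a c) = Poly_Mapping.single (em a) c"
  by (rule embed_eqI) (auto simp: lookup_single when_def lookup_embed_other dest: em_inj)

lemma embed_sum: "embed (sum f A) = (\<Sum>i\<in>A. embed (f i))"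
  by (induct A rule: infinite_finite_induct) (auto simp: embed_add)

lemma embed_uminus: "embed (- p) = - embed p"
  using embed_add[of p "- p"] by (simp add: eq_neg_iff_add_eq_0 add.commute)

lemma embed_mult: "embed (p * q) = embed p * embed q"
proof (induct p rule: mp_induct)
  case zero then show ?case by simp
next
  case (add a c p)
  have "embed (Poly_Mapping.single a c * q) = embed (Poly_Mapping.single a c) * embed q"
  proof (induct q rule: mp_induct)
    case zero then show ?case by simp
  next
    case (add b d q)
    then show ?case by (simp add: distrib_left embed_add mult_single embed_single em_add)
  qed
  with add show ?case by (simp add: distrib_right embed_add)
qed

lemma embed_Const [simp]: "embed (Const c) = Const c"
  by (simp add: Const_def embed_single)

lemma embed_Var [simp]: "embed (Var x) = Var (Inr x)"
  by (simp add: Var_def embed_single em_single)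

lemma embed_Const_mult: "embed (Const c * p) = Const c * embed p"
  by (simp add: embed_mult)

lemma embed_of_int [simp]: "embed (of_int c) = of_int c"
  using embed_Const[of "of_int c"] by simp

lemma embed_inj0: "embed p = 0 \<Longrightarrow> p = 0"
  by (rule poly_mapping_eqI) (metis lookup_embed_em lookup_zero)

lemma embed_polys:
  fixes p :: "('b \<times> sl2b, 'k::comm_ring_1) mpoly" and IA :: "'a set"
  assumes "p \<in> polys (IB \<times> UNIV)"
  shows "(embed p :: ('a + 'b \<times> sl2b, 'k) mpoly) \<in> polys (vars_U IA IB)"
  unfolding polys_def mem_Collect_eq
proof
  fix y :: "'a + 'b \<times> sl2b" assume "y \<in> vars (embed p :: ('a + 'b \<times> sl2b, 'k) mpoly)"
  then obtain k where k: "k \<in> Poly_Mapping.keys (embed p)" "y \<in> Poly_Mapping.keys k" by (auto simp: vars_iff)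
  then obtain b where kb: "k = em b" using lookup_embed_other[of k p] by (auto simp: in_keys_iff)
  then have "b \<in> Poly_Mapping.keys p" using k(1) by (simp add: in_keys_iff)
  moreover obtain x where "y = Inr x" "x \<in> Poly_Mapping.keys b" using k(2) kb keys_em by blast
  ultimately have "x \<in> vars p" by (auto simp: vars_iff)
  then have "x \<in> IB \<times> UNIV" using assms by (auto simp: polys_def)
  then show "y \<in> vars_U IA IB" using \<open>y = Inr x\<close> by (auto simp: vars_U_def)
qed

lemma poly_induct:
  assumes C: "\<And>c. P (Const c)" and X: "\<And>x. P (Var x)"
    and A: "\<And>p q. P p \<Longrightarrow> P q \<Longrightarrow> P (p + q)" and M: "\<And>p q. P p \<Longrightarrow> P q \<Longrightarrow> P (p * q)"
  shows "P (p :: ('v, 'k::comm_ring_1) mpoly)"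
proof -
  have pow: "P (Poly_Mapping.single (Poly_Mapping.single x n) (1::'k))" for x n
  proof (induct n)
    case 0 then show ?case using C[of 1] by (simp add: Const_def)
  next
    case (Suc n)
    have "Poly_Mapping.single (Poly_Mapping.single x (Suc n)) (1::'k) = Var x * Poly_Mapping.single (Poly_Mapping.single x n) 1"
      by (simp add: Var_def mult_single single_add[symmetric])
    then show ?case using M[OF X Suc] by simp
  qed
  have mono: "P (Poly_Mapping.single a (1::'k))" for a :: "'v \<Rightarrow>\<^sub>0 nat"
  proof (induct a rule: mp_induct)
    case zero then show ?case using C[of 1] by (simp add: Const_def)
  next
    case (add x n a)
    have "Poly_Mapping.single (Poly_Mapping.single x n + a) (1::'k) = Poly_Mapping.single (Poly_Mapping.single x n) 1 * Poly_Mapping.single a 1"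
      by (simp add: mult_single)
    then show ?case using M[OF pow add] by simp
  qed
  show ?thesis
  proof (induct p rule: mp_induct)
    case zero then show ?case using C[of 0] by simp
  next
    case (add a c p)
    have "Poly_Mapping.single a c = Const c * Poly_Mapping.single a 1" by (simp add: Const_def mult_single)
    then have "P (Poly_Mapping.single a c)" using M[OF C mono] by simp
    then show ?case using A add by blast
  qed
qed

lemma embed_act:
  "embed (act (gen_B :: sl2b \<Rightarrow> 'b \<times> sl2b \<Rightarrow> ('b \<times> sl2b, 'k::comm_ring_1) mpoly) g p)
     = act (gen_U :: sl2b \<Rightarrow> 'a + 'b \<times> sl2b \<Rightarrow> ('a + 'b \<times> sl2b, 'k) mpoly) g (embed p)"
proof (induct p rule: poly_induct)
  case (1 c) then show ?case by simp
next
  case (2 x)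
  obtain b s where x: "x = (b, s)" by (cases x)
  obtain c t where ct: "ad g s = (c, t)" by (cases "ad g s")
  show ?case by (simp add: act_Var x ct gen_B_def gen_U_def embed_mult)
next
  case (3 p q) then show ?case by (simp add: act_add embed_add)
next
  case (4 p q) then show ?case by (simp add: act_mult embed_add embed_mult)
qed


lemma Lcopy_embed:
  fixes w :: "nat \<Rightarrow> ('b \<times> sl2b, 'k::field_char_0) mpoly" and IA :: "'a set"
  assumes L: "is_Lcopy (IB \<times> UNIV) (act gen_B) m w"
  shows "is_Lcopy (vars_U IA IB) (act (gen_U :: sl2b \<Rightarrow> 'a + 'b \<times> sl2b \<Rightarrow> ('a + 'b \<times> sl2b, 'k) mpoly)) m (\<lambda>i. embed (w i))"
  unfolding is_Lcopy_def
proof (intro conjI allI impI)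
  fix i assume i: "i \<le> m"
  show "(embed (w i) :: ('a + 'b \<times> sl2b, 'k) mpoly) \<in> polys (vars_U IA IB)"
    using L i unfolding is_Lcopy_def by (auto intro: embed_polys)
  show "act gen_U H (embed (w i) :: ('a + 'b \<times> sl2b, 'k) mpoly) = Const (of_int (int m - 2 * int i)) * embed (w i)"
    using L i unfolding is_Lcopy_def embed_act[symmetric] by (simp add: embed_Const_mult)
  show "act gen_U F (embed (w i) :: ('a + 'b \<times> sl2b, 'k) mpoly) = (if i = m then 0 else embed (w (Suc i)))"
    using L i unfolding is_Lcopy_def embed_act[symmetric] by simp
  show "act gen_U E (embed (w i) :: ('a + 'b \<times> sl2b, 'k) mpoly) = (if i = 0 then 0 else Const (of_nat (i * (m - i + 1))) * embed (w (i - 1)))"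
    using L i unfolding is_Lcopy_def embed_act[symmetric] by (simp add: embed_mult)
next
  fix c i assume "(\<Sum>i\<le>m. Const (c i) * embed (w i)) = (0 :: ('a + 'b \<times> sl2b, 'k) mpoly)" "i \<le> m"
  then have "embed (\<Sum>i\<le>m. Const (c i) * w i) = (0 :: ('a + 'b \<times> sl2b, 'k) mpoly)"
    by (simp add: embed_sum embed_Const_mult)
  then have "(\<Sum>i\<le>m. Const (c i) * w i) = 0" by (rule embed_inj0)
  then show "c i = 0" using L \<open>i \<le> m\<close> unfolding is_Lcopy_def by blast
qed

lemma iso_embed:
  fixes q :: "('b \<times> sl2b, 'k::field_char_0) mpoly" and IA :: "'a set"
  assumes "q \<in> isotypic (IB \<times> UNIV) (act gen_B) m"
  shows "(embed q :: ('a + 'b \<times> sl2b, 'k) mpoly) \<in> isotypic (vars_U IA IB) (act gen_U) m"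
proof -
  obtain n :: nat and u where q: "q = (\<Sum>j<n. u j)" "\<forall>j<n. \<exists>w. is_Lcopy (IB \<times> UNIV) (act gen_B) m w \<and> u j \<in> span_of m w"
    using assms unfolding iso_iff by blast
  have "(embed (u j) :: ('a + 'b \<times> sl2b, 'k) mpoly) \<in> isotypic (vars_U IA IB) (act gen_U) m" if j: "j < n" for j
  proof -
    obtain w where w: "is_Lcopy (IB \<times> UNIV) (act gen_B) m w" "u j \<in> span_of m w" using q(2) j by blast
    obtain c where c: "u j = (\<Sum>i\<le>m. Const (c i) * w i)" using w(2) unfolding span_iff by blast
    have "(embed (u j) :: ('a + 'b \<times> sl2b, 'k) mpoly) = (\<Sum>i\<le>m. Const (c i) * embed (w i))"
      by (simp add: c embed_sum embed_Const_mult)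
    then have "(embed (u j) :: ('a + 'b \<times> sl2b, 'k) mpoly) \<in> span_of m (\<lambda>i. embed (w i))"
      unfolding span_iff by blast
    then show ?thesis by (rule iso_span[OF Lcopy_embed[OF w(1)]])
  qed
  then show ?thesis unfolding q(1) embed_sum by (intro iso_sum) auto
qed

lemma tkk_embed:
  fixes t :: "('b \<times> sl2b, 'k::field_char_0) mpoly" and IA :: "'a set"
  assumes "t \<in> tkk_ideal (IB \<times> UNIV) (act gen_B)"
  shows "(embed t :: ('a + 'b \<times> sl2b, 'k) mpoly) \<in> tkk_ideal (vars_U IA IB) (act gen_U)"
proof -
  obtain n :: nat and r s where t: "t = (\<Sum>i<n. r i * s i)"
    "\<forall>i<n. r i \<in> polys (IB \<times> UNIV) \<and> s i \<in> (\<Union>m\<in>{m. m \<noteq> 0 \<and> m \<noteq> 2}. isotypic (IB \<times> UNIV) (act gen_B) m)"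
    using assms unfolding tkk_ideal_def ig_iff by blast
  have "(embed (r i) :: ('a + 'b \<times> sl2b, 'k) mpoly) * embed (s i) \<in> tkk_ideal (vars_U IA IB) (act gen_U)" if i: "i < n" for i
  proof -
    obtain m where m: "m \<noteq> 0" "m \<noteq> 2" "s i \<in> isotypic (IB \<times> UNIV) (act gen_B) m" using t(2) i by blast
    have "(embed (s i) :: ('a + 'b \<times> sl2b, 'k) mpoly) \<in> isotypic (vars_U IA IB) (act gen_U) m"
      by (rule iso_embed[OF m(3)])
    then have "(embed (s i) :: ('a + 'b \<times> sl2b, 'k) mpoly) \<in> (\<Union>m\<in>{m. m \<noteq> 0 \<and> m \<noteq> 2}. isotypic (vars_U IA IB) (act gen_U) m)"
      using m(1,2) by blast
    moreover have "(embed (r i) :: ('a + 'b \<times> sl2b, 'k) mpoly) \<in> polys (vars_U IA IB)"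
      using t(2) i by (auto intro: embed_polys)
    ultimately show ?thesis unfolding tkk_ideal_def by (intro ig_mult ig_base)
  qed
  then show ?thesis unfolding t(1) embed_sum embed_mult tkk_ideal_def by (intro ig_sum) (simp add: tkk_ideal_def)
qed

lemma tkkB_act:
  fixes t :: "('b \<times> sl2b, 'k::field_char_0) mpoly"
  assumes "t \<in> tkk_ideal (IB \<times> UNIV) (act gen_B)"
  shows "act gen_B g t \<in> tkk_ideal (IB \<times> UNIV) (act gen_B)"
  unfolding tkk_ideal_def
proof (rule ig_act[where V="IB \<times> UNIV" and gen=gen_B and g=g, OF gen_B_polys _ assms[unfolded tkk_ideal_def]])
  fix s :: "('b \<times> sl2b, 'k) mpoly" assume "s \<in> (\<Union>m\<in>{m. m \<noteq> 0 \<and> m \<noteq> 2}. isotypic (IB \<times> UNIV) (act gen_B) m)"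
  then obtain m where "m \<noteq> 0" "m \<noteq> 2" "s \<in> isotypic (IB \<times> UNIV) (act gen_B) m" by blast
  moreover from this(3) have "act gen_B g s \<in> isotypic (IB \<times> UNIV) (act gen_B) m" by (rule iso_act)
  ultimately have "act gen_B g s \<in> (\<Union>m\<in>{m. m \<noteq> 0 \<and> m \<noteq> 2}. isotypic (IB \<times> UNIV) (act (gen_B :: sl2b \<Rightarrow> 'b \<times> sl2b \<Rightarrow> ('b \<times> sl2b, 'k) mpoly)) m)"
    by blast
  then show "act gen_B g s \<in> ideal_gen (IB \<times> UNIV) (\<Union>m\<in>{m. m \<noteq> 0 \<and> m \<noteq> 2}. isotypic (IB \<times> UNIV) (act gen_B) m)"
    by (rule ig_base)
qed

theorem proposition3p1:
  fixes IA :: "'a set" and IB :: "'b set"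
  defines "V \<equiv> vars_U IA IB"
      and "AU \<equiv> act (gen_U :: sl2b \<Rightarrow> 'a + 'b \<times> sl2b \<Rightarrow> ('a + 'b \<times> sl2b, 'k::field_char_0) mpoly)"
      and "AB \<equiv> act (gen_B :: sl2b \<Rightarrow> 'b \<times> sl2b \<Rightarrow> ('b \<times> sl2b, 'k) mpoly)"
  shows "tkk_ideal V AU =
           ideal_gen V (submod_gen AU {Var (Inr (b, E)) * Var (Inr (b', E)) | b b'. b \<in> IB \<and> b' \<in> IB})
       \<and> tkk_ideal V AU = ideal_gen V (embed ` tkk_ideal (IB \<times> UNIV) AB)"
proof
  let ?G = "{Var (Inr (b, E)) * Var (Inr (b', E)) | b b'. b \<in> IB \<and> b' \<in> IB} :: ('a + 'b \<times> sl2b, 'k) mpoly set"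
  let ?tB = "tkk_ideal (IB \<times> UNIV) AB"
  let ?J = "ideal_gen V (embed ` ?tB)"
  show e1: "tkk_ideal V AU = ideal_gen V (submod_gen AU ?G)"
    unfolding V_def AU_def by (rule eq1)
  show "tkk_ideal V AU = ?J"
  proof
    show "?J \<subseteq> tkk_ideal V AU"
      unfolding tkk_ideal_def[of V AU]
    proof (rule ig_sub, rule subsetI)
      fix x :: "('a + 'b \<times> sl2b, 'k) mpoly" assume "x \<in> embed ` ?tB"
      then obtain t where "t \<in> ?tB" "x = embed t" by blast
      then show "x \<in> ideal_gen V (\<Union>m\<in>{m. m \<noteq> 0 \<and> m \<noteq> 2}. isotypic V AU m)"
        using tkk_embed[of t IB IA] unfolding V_def AU_def AB_def tkk_ideal_def by simp
    qed
  next
    have Jact: "AU g p \<in> ?J" if "p \<in> ?J" for g p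
      unfolding AU_def V_def
    proof (rule ig_act[where V="vars_U IA IB" and gen=gen_U and g=g, OF gen_U_polys _ that[unfolded V_def]])
      fix s :: "('a + 'b \<times> sl2b, 'k) mpoly" assume "s \<in> embed ` ?tB"
      then obtain t where t: "t \<in> ?tB" "s = embed t" by blast
      have "act gen_U g s = embed (AB g t)" unfolding t(2) AB_def by (rule embed_act[symmetric])
      moreover have "AB g t \<in> ?tB" using tkkB_act t(1) unfolding AB_def by blast
      ultimately have "act gen_U g s \<in> embed ` ?tB" by blast
      then show "act gen_U g s \<in> ideal_gen (vars_U IA IB) (embed ` ?tB)" by (rule ig_base)
    qed
    have "submod_gen AU ?G \<subseteq> ?J"
    proof
      fix p assume "p \<in> submod_gen AU ?G"
      then show "p \<in> ?J"
      proof induct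
        case (base s)
        then obtain b b' where bb: "b \<in> IB" "b' \<in> IB" "s = Var (Inr (b, E)) * Var (Inr (b', E))" by blast
        have "Var (b, E) * Var (b', E) \<in> isotypic (IB \<times> UNIV) AB 4"
          unfolding AB_def by (rule L4_iso[where j = "\<lambda>x. x"]) (simp_all add: hj_B bb)
        moreover have "(4::nat) \<in> {m. m \<noteq> 0 \<and> m \<noteq> 2}" by simp
        ultimately have "Var (b, E) * Var (b', E) \<in> (\<Union>m\<in>{m. m \<noteq> 0 \<and> m \<noteq> 2}. isotypic (IB \<times> UNIV) AB m)"
          by blast
        then have "Var (b, E) * Var (b', E) \<in> ?tB" unfolding tkk_ideal_def by (rule ig_base)
        moreover have "s = embed (Var (b, E) * Var (b', E))" by (simp add: bb(3) embed_mult)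
        ultimately have "s \<in> embed ` ?tB" by blast
        then show ?case by (rule ig_base)
      next
        case zero then show ?case by simp
      next
        case (add p q) show ?case using add.hyps(2) add.hyps(4) by (rule ig_add)
      next
        case (smult p c) show ?case using smult.hyps(2) by (rule ig_Const_mult)
      next
        case (action p g) show ?case using action.hyps(2) by (rule Jact)
      qed
    qed
    then show "tkk_ideal V AU \<subseteq> ?J" unfolding e1 by (rule ig_sub)
  qed
qed


end
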